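(* Let $(\Omega,\mathcal F,\mathbb P)$ be a probability space. For each $N\in\mathbb N$ let $\{t_j\}_{j\in\mathbb N}=\{t_j^{(N)}\}_{j\in\mathbb N}$ be a sequence of positive random variables on this space (the dependence on $N$ is suppressed in the notation) satisfying: (i) $\mathbb E(t_i)=\frac1N$ for all $i$ and all $N$; (ii) there exist $r>0$ and a constant $\tilde C>0$ such that $\mathbb E(t_i^{2+r})\le \frac{\tilde C}{N^{2+r}}$ for all $i$ and all $N$; (iii) for all $m\in\mathbb N$ (and all $N$), the vector $(t_1,\dots,t_m)$ is negatively superadditive dependent. Set $\tau_0=0$ and $\tau_i=\sum_{j=1}^i t_j$ for $i\ge1$. Let $W=(W_s)_{s\ge0}$ be a random function on the same probability space that is almost surely continuous, let $a\in\mathbb R$, and consider observations $$Y_{\tau_i}=a\tau_i+W_{\tau_i}-W_{\tau_{i-1}},\qquad i=1,\dots,N,$$ with estimator $$\hat a_{N}=\frac{\sum_{i=1}^{N}Y_{\tau_i}\tau_i}{\sum_{i=1}^{N}\tau_i^2}.$$ Then, almost surely as $N\to\infty$, $$N\big(\hat a_{N}-a\big)\to 3\int_0^1 (W_1-W_s)\,ds.$$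
   Context: A function $\phi:\mathbb R^m\to\mathbb R$ is superadditive if $\phi(x\vee y)+\phi(x\wedge y)\ge\phi(x)+\phi(y)$ for all $x,y\in\mathbb R^m$, where $\vee$ and $\wedge$ denote componentwise maximum and minimum. A random vector $(X_1,\dots,X_m)$ is negatively superadditive dependent (NSD) if for every superadditive $\phi$ such that the expectation $\mathbb E\phi(X_1,\dots,X_m)$ exists, $\mathbb E\phi(X_1,\dots,X_m)\le\mathbb E\phi(X_1^*,\dots,X_m^* )$, where $X_1^*,\dots,X_m^*$ are independent and $X_i^*$ has the same distribution as $X_i$ for each $i$. *)

theory Defs
  imports "HOL-Probability.Probability"
begin

text \<open>Vectors in R^m are represented as functions on a finite index set I
(extensional outside I). Componentwise max/min are sup/inf of functions.\<close>

definition superadditive_on :: "'i set \<Rightarrow> (('i \<Rightarrow> real) \<Rightarrow> real) \<Rightarrow> bool" where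
  "superadditive_on I \<phi> \<longleftrightarrow>
     (\<forall>x \<in> PiE I (\<lambda>_. UNIV). \<forall>y \<in> PiE I (\<lambda>_. UNIV).
        \<phi> (sup x y) + \<phi> (inf x y) \<ge> \<phi> x + \<phi> y)"

text \<open>Negative superadditive dependence of the family (X i) for i in I:
for every (Borel measurable) superadditive phi for which the expectations exist,
E phi(X) \<le> E phi(X*), where X* has independent components with the same marginals,
i.e. law of X* is the product of the marginal laws.\<close>

definition NSD :: "'a measure \<Rightarrow> 'i set \<Rightarrow> ('i \<Rightarrow> 'a \<Rightarrow> real) \<Rightarrow> bool" where
  "NSD M I X \<longleftrightarrow>
     (\<forall>\<phi>. superadditive_on I \<phi>
        \<and> \<phi> \<in> borel_measurable (PiM I (\<lambda>_. borel))
        \<and> integrable M (\<lambda>\<omega>. \<phi> (restrict (\<lambda>i. X i \<omega>) I))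
        \<and> integrable (PiM I (\<lambda>i. distr M borel (X i))) \<phi>
        \<longrightarrow> (\<integral>\<omega>. \<phi> (restrict (\<lambda>i. X i \<omega>) I) \<partial>M)
            \<le> (\<integral>x. \<phi> x \<partial>(PiM I (\<lambda>i. distr M borel (X i)))))"

end

theory Submission
  imports Defs
begin


lemma abel_sum:
  fixes f g :: "nat \<Rightarrow> real"
  shows "(\<Sum>i=1..m. (f i - f (i-1)) * g i) = f m * g m - f 0 * g 0 - (\<Sum>i=1..m. f (i-1) * (g i - g (i-1)))"
  by (induction m) (auto simp: algebra_simps)

lemma telescope_sum:
  fixes f :: "nat \<Rightarrow> real"
  shows "(\<Sum>i=1..m. (f i - f (i-1))) = f m - f 0"
  by (induction m) auto

lemma sum_squares_real:
  "(\<Sum>i=1..n. (real i)^2) = real n * (real n + 1) * (2 * real n + 1) / 6"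
  by (induction n) (auto simp: algebra_simps power2_eq_square add_divide_distrib)

lemma tendsto_approx:
  fixes a b c :: "nat \<Rightarrow> real"
  assumes "eventually (\<lambda>n. \<bar>a n - b n\<bar> \<le> c n) sequentially" "c \<longlonglongrightarrow> 0" "b \<longlonglongrightarrow> L"
  shows "a \<longlonglongrightarrow> L"
proof -
  have "(\<lambda>n. a n - b n) \<longlonglongrightarrow> 0"
    by (rule Lim_null_comparison[OF _ assms(2)]) (use assms(1) in auto)
  from tendsto_add[OF this assms(3)] show ?thesis by simp
qed

lemma sq_mean_limit:
  fixes T :: "nat \<Rightarrow> nat \<Rightarrow> real" and e :: "nat \<Rightarrow> real"
  assumes e: "e \<longlonglongrightarrow> 0"
    and close: "eventually (\<lambda>n. \<forall>i\<le>n. \<bar>T n i - real i / real n\<bar> \<le> e n) sequentially"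
  shows "(\<lambda>n. (\<Sum>i=1..n. (T n i)^2) / real n) \<longlonglongrightarrow> 1/3"
proof (rule tendsto_approx)
  show "(\<lambda>n. e n * (2 + e n)) \<longlonglongrightarrow> 0"
    using tendsto_mult[OF e tendsto_add[OF tendsto_const[of 2] e]] by simp
  have "(\<lambda>n. 1/3 + (1/2) * inverse (real n) + (1/6) * inverse (real n) * inverse (real n)) \<longlonglongrightarrow> 1/3 + (1/2) * 0 + (1/6) * 0 * 0"
    by (intro tendsto_intros lim_inverse_n)
  moreover have "eventually (\<lambda>n. 1/3 + (1/2) * inverse (real n) + (1/6) * inverse (real n) * inverse (real n)
      = (\<Sum>i=1..n. (real i / real n)^2) / real n) sequentially"
  proof (rule eventually_sequentiallyI[of 1])
    fix n :: nat assume "1 \<le> n"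
    have "(\<Sum>i=1..n. (real i / real n)^2) = (\<Sum>i=1..n. (real i)^2) / (real n)^2"
      by (simp add: power_divide sum_divide_distrib)
    with \<open>1 \<le> n\<close> show "1/3 + (1/2) * inverse (real n) + (1/6) * inverse (real n) * inverse (real n)
      = (\<Sum>i=1..n. (real i / real n)^2) / real n"
      unfolding sum_squares_real by (simp add: field_simps power2_eq_square power3_eq_cube)
  qed
  ultimately show "(\<lambda>n. (\<Sum>i=1..n. (real i / real n)^2) / real n) \<longlonglongrightarrow> 1/3"
    using Lim_transform_eventually by fastforce
  have ev: "eventually (\<lambda>n. 1 \<le> n) sequentially" by (rule eventually_ge_at_top)
  show "eventually (\<lambda>n. \<bar>(\<Sum>i=1..n. (T n i)^2) / real n - (\<Sum>i=1..n. (real i / real n)^2) / real n\<bar> \<le> e n * (2 + e n)) sequentially"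
    using close ev
  proof eventually_elim
    case (elim n)
    have e0: "0 \<le> e n" using elim(1)[rule_format, of 0] by simp
    have b: "\<bar>(T n i)^2 - (real i / real n)^2\<bar> \<le> e n * (2 + e n)" if "i \<in> {1..n}" for i
    proof -
      have c: "\<bar>T n i - real i / real n\<bar> \<le> e n" using elim(1) that by auto
      have r: "0 \<le> real i / real n" "real i / real n \<le> 1" using that by auto
      have "\<bar>(T n i)^2 - (real i / real n)^2\<bar> = \<bar>T n i - real i / real n\<bar> * \<bar>T n i + real i / real n\<bar>"
        by (simp add: power2_eq_square abs_mult[symmetric] algebra_simps)
      also have "\<dots> \<le> e n * (2 + e n)"
      proof (rule mult_mono[OF c])
        show "\<bar>T n i + real i / real n\<bar> \<le> 2 + e n"
          using c r e0 unfolding abs_le_iff by linarith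
      qed (use e0 in auto)
      finally show ?thesis .
    qed
    have "\<bar>(\<Sum>i=1..n. (T n i)^2) - (\<Sum>i=1..n. (real i / real n)^2)\<bar> \<le> (\<Sum>i=1..n. e n * (2 + e n))"
      unfolding sum_subtractf[symmetric] by (rule order.trans[OF sum_abs sum_mono]) (use b in auto)
    also have "\<dots> = real n * (e n * (2 + e n))" by simp
    finally have "\<bar>(\<Sum>i=1..n. (T n i)^2) - (\<Sum>i=1..n. (real i / real n)^2)\<bar> / real n \<le> e n * (2 + e n)"
      using elim(2) by (simp add: divide_le_eq mult.commute)
    then show ?case by (simp add: diff_divide_distrib[symmetric])
  qed
qed

lemma tendsto_zero_by_eps:
  fixes f :: "nat \<Rightarrow> real"
  assumes "\<And>\<epsilon>. \<epsilon> > 0 \<Longrightarrow> eventually (\<lambda>n. \<bar>f n\<bar> \<le> \<epsilon>) sequentially"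
  shows "f \<longlonglongrightarrow> 0"
proof (rule tendstoI)
  fix \<epsilon> :: real assume "\<epsilon> > 0"
  then have "\<epsilon>/2 > 0" by simp
  from assms[OF this] show "eventually (\<lambda>n. dist (f n) 0 < \<epsilon>) sequentially"
    by eventually_elim (use \<open>\<epsilon> > 0\<close> in auto)
qed

lemma local_int_bound:
  fixes W :: "real \<Rightarrow> real"
  assumes Wc: "continuous_on {a..b} W" and ab: "a \<le> b"
    and bd: "\<And>s. s \<in> {a..b} \<Longrightarrow> \<bar>W s - W a\<bar> \<le> \<epsilon>"
  shows "\<bar>integral {a..b} W - W a * (b - a)\<bar> \<le> \<epsilon> * (b - a)"
proof -
  have i1: "W integrable_on {a..b}" by (rule integrable_continuous_interval[OF Wc])
  have i2: "(\<lambda>s. W a) integrable_on {a..b}" by (rule integrable_continuous_interval) simp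
  have "integral {a..b} (\<lambda>s. W s - W a) = integral {a..b} W - W a * (b - a)"
    using integral_diff[OF i1 i2] ab by simp
  moreover have "norm (integral {a..b} (\<lambda>s. W s - W a)) \<le> integral {a..b} (\<lambda>s. \<epsilon>)"
    by (rule integral_norm_bound_integral) (use i1 i2 bd in \<open>auto intro: integrable_diff\<close>)
  ultimately show ?thesis using ab by (simp add: mult.commute)
qed

lemma stieltjes_limit:
  fixes T :: "nat \<Rightarrow> nat \<Rightarrow> real" and W :: "real \<Rightarrow> real" and e :: "nat \<Rightarrow> real"
  assumes Wc: "continuous_on {0..} W"
    and T0: "\<And>n. T n 0 = 0"
    and mono: "\<And>n i. 1 \<le> i \<Longrightarrow> i \<le> n \<Longrightarrow> T n (i-1) \<le> T n i"
    and e: "e \<longlonglongrightarrow> 0"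
    and close: "eventually (\<lambda>n. \<forall>i\<le>n. \<bar>T n i - real i / real n\<bar> \<le> e n) sequentially"
  shows "(\<lambda>n. \<Sum>i=1..n. (W (T n i) - W (T n (i-1))) * T n i) \<longlonglongrightarrow> W 1 - integral {0..1} W"
proof -
  define G where "G x = integral {0..x} W" for x
  have W2: "continuous_on {0..2} W" using Wc by (rule continuous_on_subset) auto
  have Wx: "continuous_on {0..x} W" for x using Wc by (rule continuous_on_subset) auto
  have Gc: "continuous_on {0..2} G"
    unfolding G_def by (rule indefinite_integral_continuous_1[OF integrable_continuous_interval[OF W2]])
  have Tnn: "0 \<le> T n i" if "i \<le> n" for n i
    using that
  proof (induction i)
    case 0 then show ?case by (simp add: T0)
  next
    case (Suc i)
    then show ?case using mono[of "Suc i" n] by simp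
  qed
  have e0: "(\<lambda>n. e n) \<longlonglongrightarrow> 0" by (rule e)
  have ev1: "eventually (\<lambda>n. e n \<le> 1/2) sequentially"
    using order_tendstoD(2)[OF e, of "1/2"] by (auto elim: eventually_mono)
  have ev: "eventually (\<lambda>n. 1 \<le> n \<and> e n \<le> 1/2 \<and> (\<forall>i\<le>n. \<bar>T n i - real i / real n\<bar> \<le> e n)) sequentially"
    using eventually_ge_at_top[of 1] ev1 close by eventually_elim auto
  have inr: "eventually (\<lambda>n. \<forall>i\<le>n. T n i \<in> {0..2}) sequentially"
    using ev
  proof eventually_elim
    case (elim n)
    show ?case
    proof (intro allI impI)
      fix i assume "i \<le> n"
      then have "real i / real n \<le> 1" using elim by auto
      moreover have "\<bar>T n i - real i / real n\<bar> \<le> e n" using elim \<open>i \<le> n\<close> by blast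
      ultimately have "T n i \<le> 2" using elim unfolding abs_le_iff by linarith
      then show "T n i \<in> {0..2}" using Tnn[OF \<open>i \<le> n\<close>] by auto
    qed
  qed
  have Tn: "(\<lambda>n. T n n) \<longlonglongrightarrow> 1"
  proof (rule tendsto_approx[OF _ e tendsto_const])
    show "eventually (\<lambda>n. \<bar>T n n - 1\<bar> \<le> e n) sequentially"
      using ev by eventually_elim auto
  qed
  have Tnin: "eventually (\<lambda>n. T n n \<in> {0..2}) sequentially"
    using inr by eventually_elim auto
  have lim1: "(\<lambda>n. W (T n n) * T n n) \<longlonglongrightarrow> W 1 * 1"
    by (intro tendsto_mult Tn continuous_on_tendsto_compose[OF W2 Tn _ Tnin]) auto
  have lim2: "(\<lambda>n. G (T n n)) \<longlonglongrightarrow> G 1"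
    by (rule continuous_on_tendsto_compose[OF Gc Tn _ Tnin]) auto
  define R where "R n = (\<Sum>i=1..n. W (T n (i-1)) * (T n i - T n (i-1)))" for n
  have abel: "(\<Sum>i=1..n. (W (T n i) - W (T n (i-1))) * T n i) = W (T n n) * T n n - R n" for n
    using abel_sum[of "\<lambda>i. W (T n i)" "T n" n] by (simp add: R_def T0)
  have key: "(\<lambda>n. R n - G (T n n)) \<longlonglongrightarrow> 0"
  proof (rule tendsto_zero_by_eps)
    fix \<epsilon> :: real assume "\<epsilon> > 0"
    have uc: "uniformly_continuous_on {0..2} W"
      by (rule compact_uniformly_continuous[OF W2]) simp
    obtain \<eta> where "\<eta> > 0" and \<eta>: "\<And>x y. x \<in> {0..2} \<Longrightarrow> y \<in> {0..2} \<Longrightarrow> dist y x < \<eta> \<Longrightarrow> dist (W y) (W x) < \<epsilon>/2"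
      using uc[unfolded uniformly_continuous_on_def, rule_format, of "\<epsilon>/2"] \<open>\<epsilon> > 0\<close> by auto
    have "(\<lambda>n. inverse (real n) + 2 * e n) \<longlonglongrightarrow> 0 + 2 * 0"
      by (intro tendsto_intros lim_inverse_n e)
    then have ev3: "eventually (\<lambda>n. inverse (real n) + 2 * e n < \<eta>) sequentially"
      using \<open>\<eta> > 0\<close> by (simp add: order_tendsto_iff)
    show "eventually (\<lambda>n. \<bar>R n - G (T n n)\<bar> \<le> \<epsilon>) sequentially"
      using ev ev3 inr
    proof eventually_elim
      case (elim n)
      have step: "\<bar>W (T n (i-1)) * (T n i - T n (i-1)) - (G (T n i) - G (T n (i-1)))\<bar> \<le> \<epsilon>/2 * (T n i - T n (i-1))"
        if i: "i \<in> {1..n}" for i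
      proof -
        have m: "T n (i-1) \<le> T n i" using mono[of i n] i by auto
        have in1: "T n (i-1) \<in> {0..2}" "T n i \<in> {0..2}" using elim(3) i by auto
        have all: "\<forall>i\<le>n. \<bar>T n i - real i / real n\<bar> \<le> e n" using elim(1) by blast
        have c1: "\<bar>T n i - real i / real n\<bar> \<le> e n" "\<bar>T n (i-1) - real (i-1) / real n\<bar> \<le> e n"
          using all[rule_format, of i] all[rule_format, of "i-1"] i by auto
        have "real (i-1) / real n = real i / real n - inverse (real n)"
          using i by (simp add: of_nat_diff diff_divide_distrib divide_inverse algebra_simps)
        with c1 have d: "T n i - T n (i-1) \<le> inverse (real n) + 2 * e n" by (simp add: abs_le_iff)
        have "G (T n i) - G (T n (i-1)) = integral {T n (i-1)..T n i} W"
          unfolding G_def using Henstock_Kurzweil_Integration.integral_combine[of 0 "T n (i-1)" "T n i" W,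
            OF _ m integrable_continuous_interval[OF Wx]] in1 by simp
        moreover have "\<bar>integral {T n (i-1)..T n i} W - W (T n (i-1)) * (T n i - T n (i-1))\<bar> \<le> \<epsilon>/2 * (T n i - T n (i-1))"
        proof (rule local_int_bound[OF _ m])
          show "continuous_on {T n (i-1)..T n i} W" using in1 by (intro continuous_on_subset[OF Wc]) auto
          fix s assume s: "s \<in> {T n (i-1)..T n i}"
          then have "s \<in> {0..2}" using in1 by auto
          moreover have "dist s (T n (i-1)) < \<eta>" using s d elim(2) by (auto simp: dist_real_def)
          ultimately have "dist (W s) (W (T n (i-1))) < \<epsilon>/2" using \<eta> in1 by blast
          then show "\<bar>W s - W (T n (i-1))\<bar> \<le> \<epsilon>/2" by (simp add: dist_real_def)
        qed
        ultimately show ?thesis by (simp add: abs_minus_commute)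
      qed
      have "G (T n n) = (\<Sum>i=1..n. G (T n i) - G (T n (i-1)))"
        using telescope_sum[of "\<lambda>i. G (T n i)" n] by (simp add: T0 G_def)
      then have "\<bar>R n - G (T n n)\<bar> = \<bar>\<Sum>i=1..n. W (T n (i-1)) * (T n i - T n (i-1)) - (G (T n i) - G (T n (i-1)))\<bar>"
        by (simp add: R_def sum_subtractf)
      also have "\<dots> \<le> (\<Sum>i=1..n. \<epsilon>/2 * (T n i - T n (i-1)))"
        by (rule order.trans[OF sum_abs sum_mono]) (use step in auto)
      also have "\<dots> = \<epsilon>/2 * (\<Sum>i=1..n. (T n i - T n (i-1)))"
        by (simp add: sum_distrib_left)
      also have "\<dots> = \<epsilon>/2 * T n n"
        using telescope_sum[of "T n" n] by (simp add: T0)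
      also have "\<dots> \<le> \<epsilon>/2 * 2" using elim(3) \<open>\<epsilon> > 0\<close> by (intro mult_left_mono) auto
      finally show ?case by simp
    qed
  qed
  have "(\<lambda>n. W (T n n) * T n n - ((R n - G (T n n)) + G (T n n))) \<longlonglongrightarrow> W 1 * 1 - (0 + G 1)"
    by (intro tendsto_intros lim1 lim2 key)
  then show ?thesis unfolding abel by (simp add: G_def)
qed

lemma det_final:
  fixes T :: "nat \<Rightarrow> nat \<Rightarrow> real" and W :: "real \<Rightarrow> real" and e :: "nat \<Rightarrow> real" and a :: real
  assumes Wc: "continuous_on {0..} W"
    and T0: "\<And>n. T n 0 = 0"
    and mono: "\<And>n i. 1 \<le> i \<Longrightarrow> i \<le> n \<Longrightarrow> T n (i-1) \<le> T n i"
    and e: "e \<longlonglongrightarrow> 0"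
    and close: "eventually (\<lambda>n. \<forall>i\<le>n. \<bar>T n i - real i / real n\<bar> \<le> e n) sequentially"
  shows "(\<lambda>n. real n * ((\<Sum>i=1..n. (a * T n i + W (T n i) - W (T n (i-1))) * T n i)
            / (\<Sum>i=1..n. (T n i)^2) - a)) \<longlonglongrightarrow> 3 * integral {0..1} (\<lambda>s. W 1 - W s)"
proof -
  define D where "D n = (\<Sum>i=1..n. (W (T n i) - W (T n (i-1))) * T n i)" for n
  define Q where "Q n = (\<Sum>i=1..n. (T n i)^2)" for n
  have D: "D \<longlonglongrightarrow> W 1 - integral {0..1} W"
    unfolding D_def by (rule stieltjes_limit[OF Wc T0 mono e close])
  have Q: "(\<lambda>n. Q n / real n) \<longlonglongrightarrow> 1/3"
    unfolding Q_def by (rule sq_mean_limit[OF e close])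
  have lim: "(\<lambda>n. D n / (Q n / real n)) \<longlonglongrightarrow> (W 1 - integral {0..1} W) / (1/3)"
    by (rule tendsto_divide[OF D Q]) simp
  have evQ: "eventually (\<lambda>n. Q n / real n > 0) sequentially"
    using order_tendstoD(1)[OF Q, of 0] by simp
  have ev: "eventually (\<lambda>n. D n / (Q n / real n) = real n * ((\<Sum>i=1..n. (a * T n i + W (T n i) - W (T n (i-1))) * T n i)
            / (\<Sum>i=1..n. (T n i)^2) - a)) sequentially"
    using evQ eventually_ge_at_top[of 1]
  proof eventually_elim
    case (elim n)
    have Qn: "Q n \<noteq> 0" using elim by auto
    have eq: "(\<Sum>i=1..n. (a * T n i + W (T n i) - W (T n (i-1))) * T n i) = a * Q n + D n"
      unfolding Q_def D_def by (simp add: sum_distrib_left sum.distrib[symmetric] algebra_simps power2_eq_square)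
    have q: "(\<Sum>i=1..n. (T n i)^2) = Q n" by (simp add: Q_def)
    show ?case unfolding eq q using Qn elim by (simp add: field_simps)
  qed
  have W01: "integral {0..1} (\<lambda>s. W 1 - W s) = W 1 - integral {0..1} W"
  proof -
    have W1: "continuous_on {0..1} W" using Wc by (rule continuous_on_subset) auto
    show ?thesis
      using integral_diff[OF integrable_continuous_interval[of 0 1 "\<lambda>s. W 1"] integrable_continuous_interval[OF W1]]
      by simp
  qed
  show ?thesis
    using Lim_transform_eventually[OF lim ev] unfolding W01 by (simp add: mult.commute)
qed



lemma exp_pair_ineq:
  fixes u v P Q :: real
  assumes "Q \<le> u" "u \<le> P" "Q \<le> v" "v \<le> P" "P + Q = u + v"
  shows "exp u + exp v \<le> exp P + exp Q"
proof (cases "P = Q")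
  case True then show ?thesis using assms by auto
next
  case False
  then have PQ: "P - Q > 0" using assms by auto
  define \<alpha> where "\<alpha> = (u - Q) / (P - Q)"
  have a0: "0 \<le> \<alpha>" "\<alpha> \<le> 1" using assms PQ by (auto simp: \<alpha>_def field_simps)
  have cv: "convex_on UNIV (\<lambda>x. exp (1 * x))" by (rule convex_on_exp) simp
  have au: "\<alpha> * (P - Q) = u - Q" using PQ by (simp add: \<alpha>_def)
  have u: "u = (1 - \<alpha>) * Q + \<alpha> * P" using au by (simp add: algebra_simps)
  have v: "v = (1 - (1 - \<alpha>)) * Q + (1 - \<alpha>) * P" using au assms(5) by (simp add: algebra_simps)
  have "exp u \<le> (1 - \<alpha>) * exp Q + \<alpha> * exp P"
    using convex_onD[OF cv, of \<alpha> Q P] a0 u by simp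
  moreover have "exp v \<le> (1 - (1 - \<alpha>)) * exp Q + (1 - \<alpha>) * exp P"
    using convex_onD[OF cv, of "1 - \<alpha>" Q P] a0 v by simp
  ultimately show ?thesis by (simp add: algebra_simps)
qed

lemma superadditive_exp_sum:
  fixes g :: "real \<Rightarrow> real" and c :: real and I :: "'i set"
  assumes "finite I" "mono g"
  shows "superadditive_on I (\<lambda>x. \<Prod>i\<in>I. exp (c * g (x i)))"
  unfolding superadditive_on_def
proof (intro ballI)
  fix x y :: "'i \<Rightarrow> real"
  define a where "a i = c * g (x i)" for i
  define b where "b i = c * g (y i)" for i
  have pr: "(\<Prod>i\<in>I. exp (f i)) = exp (\<Sum>i\<in>I. f i)" for f :: "'i \<Rightarrow> real"
    using assms(1) by (simp add: exp_sum)
  have gmax: "g (max s t) = max (g s) (g t)" and gmin: "g (min s t) = min (g s) (g t)" for s t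
    using assms(2) by (auto simp: max_def min_def mono_def) (metis antisym nle_le)+
  have sx: "(sup x y) i = max (x i) (y i)" "(inf x y) i = min (x i) (y i)" for i
    by (auto simp: sup_max inf_min)
  show "(\<Prod>i\<in>I. exp (c * g (x i))) + (\<Prod>i\<in>I. exp (c * g (y i)))
       \<le> (\<Prod>i\<in>I. exp (c * g (sup x y i))) + (\<Prod>i\<in>I. exp (c * g (inf x y i)))"
  proof (cases "c \<ge> 0")
    case True
    then have e1: "c * g (sup x y i) = max (a i) (b i)" "c * g (inf x y i) = min (a i) (b i)" for i
      by (auto simp: sx gmax gmin a_def b_def max_mult_distrib_left min_mult_distrib_left sup_max inf_min)
    show ?thesis unfolding e1 pr a_def[symmetric] b_def[symmetric]
      by (rule exp_pair_ineq) (auto intro!: sum_mono simp: sum.distrib[symmetric] intro: sum.cong)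
  next
    case False
    have neg1: "c * g (max s t) = min (c * g s) (c * g t)" "c * g (min s t) = max (c * g s) (c * g t)" for s t
    proof -
      have "c * g s \<le> c * g t \<longleftrightarrow> g t \<le> g s" using False by (simp add: mult_le_cancel_left)
      moreover have "s \<le> t \<Longrightarrow> g s \<le> g t" "t \<le> s \<Longrightarrow> g t \<le> g s" using assms(2) by (auto simp: mono_def)
      ultimately show "c * g (max s t) = min (c * g s) (c * g t)" "c * g (min s t) = max (c * g s) (c * g t)"
        by (auto simp: max_def min_def)
    qed
    then have e1: "c * g (sup x y i) = min (a i) (b i)" "c * g (inf x y i) = max (a i) (b i)" for i
      by (auto simp: a_def b_def sup_max inf_min)
    show ?thesis unfolding e1 pr a_def[symmetric] b_def[symmetric]
      by (subst add.commute, rule exp_pair_ineq) (auto intro!: sum_mono simp: sum.distrib[symmetric] intro: sum.cong)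
  qed
qed

lemma nsd_prod_bound:
  fixes M :: "'a measure" and X :: "nat \<Rightarrow> 'a \<Rightarrow> real" and g :: "real \<Rightarrow> real"
  assumes P: "prob_space M" and nsd: "NSD M {1..m} X"
    and rv: "\<And>i. i \<in> {1..m} \<Longrightarrow> X i \<in> borel_measurable M"
    and gm: "mono g" and gb[measurable]: "g \<in> borel_measurable borel"
    and bd: "\<And>i \<omega>. i \<in> {1..m} \<Longrightarrow> \<omega> \<in> space M \<Longrightarrow> exp (c * g (X i \<omega>)) \<le> B"
  shows "(\<integral>\<omega>. (\<Prod>i\<in>{1..m}. exp (c * g (X i \<omega>))) \<partial>M) \<le> (\<Prod>i\<in>{1..m}. \<integral>\<omega>. exp (c * g (X i \<omega>)) \<partial>M)"
proof -
  interpret prob_space M by (rule P)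
  define Y where "Y = (\<lambda>i \<omega>. if i \<in> {1..m} then X i \<omega> else 0)"
  have rvY[measurable]: "Y i \<in> borel_measurable M" for i
    using rv by (cases "i \<in> {1..m}") (auto simp: Y_def)
  define M' where "M' i = distr M borel (Y i)" for i
  interpret Y: prob_space "M' i" for i
    unfolding M'_def by (rule prob_space_distr) simp
  interpret product_sigma_finite M' ..
  have PiM_eq: "PiM {1..m} (\<lambda>i. distr M borel (X i)) = PiM {1..m} M'"
    by (rule PiM_cong) (auto simp: M'_def Y_def intro!: distr_cong)
  define \<phi> where "\<phi> x = (\<Prod>i\<in>{1..m}. exp (c * g (x i)))" for x :: "nat \<Rightarrow> real"
  have B0: "0 \<le> B" if "m \<ge> 1" 
  proof -
    obtain \<omega> where "\<omega> \<in> space M" using not_empty by blast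
    from bd[OF _ this, of 1] that show ?thesis by (meson exp_ge_zero order_trans atLeastAtMost_iff order_refl)
  qed
  have intX: "integrable M (\<lambda>\<omega>. exp (c * g (X i \<omega>)))" if i: "i \<in> {1..m}" for i
  proof (rule integrable_const_bound[where B=B])
    show "AE x in M. norm (exp (c * g (X i x))) \<le> B" using bd[OF i] by auto
    show "(\<lambda>\<omega>. exp (c * g (X i \<omega>))) \<in> borel_measurable M" using rv[OF i] by measurable
  qed
  have intM': "integrable (M' i) (\<lambda>x. exp (c * g x))" if i: "i \<in> {1..m}" for i
    unfolding M'_def using intX[OF i] i rv[OF i] by (subst integrable_distr_eq) (auto simp: Y_def)
  have restr: "\<phi> (restrict (\<lambda>i. X i \<omega>) {1..m}) = (\<Prod>i\<in>{1..m}. exp (c * g (X i \<omega>)))" for \<omega>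
    unfolding \<phi>_def by (intro prod.cong) auto
  have "(\<integral>\<omega>. \<phi> (restrict (\<lambda>i. X i \<omega>) {1..m}) \<partial>M) \<le> (\<integral>x. \<phi> x \<partial>(PiM {1..m} (\<lambda>i. distr M borel (X i))))"
  proof (rule nsd[unfolded NSD_def, rule_format], intro conjI)
    show "superadditive_on {1..m} \<phi>" unfolding \<phi>_def by (rule superadditive_exp_sum[OF _ gm]) simp
    show "\<phi> \<in> borel_measurable (Pi\<^sub>M {1..m} (\<lambda>_. borel))" unfolding \<phi>_def by measurable
    show "integrable M (\<lambda>\<omega>. \<phi> (restrict (\<lambda>i. X i \<omega>) {1..m}))"
      unfolding restr
    proof (rule integrable_const_bound[where B="B ^ m"])
      show "AE x in M. norm (\<Prod>i\<in>{1..m}. exp (c * g (X i x))) \<le> B ^ m"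
      proof (rule AE_I2)
        fix x assume x: "x \<in> space M"
        have "(\<Prod>i\<in>{1..m}. exp (c * g (X i x))) \<le> (\<Prod>i\<in>{1..m}. B)"
          by (rule prod_mono) (use bd x in auto)
        then show "norm (\<Prod>i\<in>{1..m}. exp (c * g (X i x))) \<le> B ^ m" by (simp add: abs_prod)
      qed
      show "(\<lambda>x. \<Prod>i\<in>{1..m}. exp (c * g (X i x))) \<in> borel_measurable M"
        by (intro borel_measurable_prod) (use intX in auto)
    qed
    show "integrable (Pi\<^sub>M {1..m} (\<lambda>i. distr M borel (X i))) \<phi>"
      unfolding PiM_eq \<phi>_def by (rule product_integrable_prod) (auto intro: intM')
  qed
  also have "(\<integral>x. \<phi> x \<partial>(PiM {1..m} (\<lambda>i. distr M borel (X i)))) = (\<Prod>i\<in>{1..m}. \<integral>x. exp (c * g x) \<partial>M' i)"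
    unfolding PiM_eq \<phi>_def by (rule product_integral_prod) (auto intro: intM')
  also have "\<dots> = (\<Prod>i\<in>{1..m}. \<integral>\<omega>. exp (c * g (X i \<omega>)) \<partial>M)"
    by (intro prod.cong refl) (auto simp: M'_def Y_def rv integral_distr)
  finally show ?thesis unfolding restr .
qed



lemma exp_neg_bound:
  fixes y :: real assumes y: "0 \<le> y"
  shows "exp (- y) \<le> 1 - y + y\<^sup>2"
proof -
  have e: "1 + y + y\<^sup>2 / 2 \<le> exp y" by (rule exp_lower_Taylor_quadratic[OF y])
  have q: "0 \<le> 1 - y + y\<^sup>2"
    using sum_squares_ge_zero[of "y - 1/2" 0] by (simp add: power2_eq_square algebra_simps)
  have p: "1 \<le> (1 - y + y\<^sup>2) * (1 + y + y\<^sup>2 / 2)"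
  proof -
    have "(1 - y + y\<^sup>2) * (1 + y + y\<^sup>2 / 2) = 1 + y\<^sup>2 / 2 + y^3/2 + y^4/2"
      by (simp add: field_simps power2_eq_square power3_eq_cube power4_eq_xxxx)
    then show ?thesis using y by simp
  qed
  also have "\<dots> \<le> (1 - y + y\<^sup>2) * exp y" by (rule mult_left_mono[OF e q])
  finally have "exp (-y) * exp y \<le> (1 - y + y\<^sup>2) * exp y" by (simp add: exp_minus)
  then show ?thesis by simp
qed

lemma sq_le_split:
  fixes x n r :: real assumes x: "0 < x" and n: "0 < n" and r: "0 < r"
  shows "x\<^sup>2 \<le> 1 / n\<^sup>2 + x powr (2 + r) * n powr r"
proof (cases "x \<le> 1 / n")
  case True
  then have "x\<^sup>2 \<le> (1/n)\<^sup>2" using x by (intro power_mono) auto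
  moreover have "0 \<le> x powr (2 + r) * n powr r" by simp
  moreover have "(1/n)\<^sup>2 = 1 / n\<^sup>2" by (simp add: power_divide)
  ultimately show ?thesis by linarith
next
  case False
  then have "1 < x * n" using n by (simp add: field_simps)
  then have "1 \<le> (x * n) powr r" using r by (simp add: ge_one_powr_ge_zero)
  then have "x\<^sup>2 * 1 \<le> x\<^sup>2 * (x * n) powr r" using x by (intro mult_left_mono) auto
  also have "x\<^sup>2 * (x * n) powr r = x powr (2 + r) * n powr r"
    using x n by (simp add: powr_add powr_mult flip: powr_numeral)
  finally have "x\<^sup>2 \<le> x powr (2 + r) * n powr r" by simp
  moreover have "0 \<le> 1 / n\<^sup>2" by simp
  ultimately show ?thesis by linarith
qed

definition badset :: "'a measure \<Rightarrow> (nat \<Rightarrow> 'a \<Rightarrow> real) \<Rightarrow> nat \<Rightarrow> real \<Rightarrow> 'a set" where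
  "badset M X n \<theta> =
     (\<Union>j\<in>{1..n}. {\<omega>\<in>space M. X j \<omega> > 1 / real n powr \<theta>})
   \<union> (\<Union>m\<in>{1..n}. {\<omega>\<in>space M. (\<Sum>j=1..m. X j \<omega>) \<le> real m / real n - real n powr (-\<theta>/2)})
   \<union> (\<Union>m\<in>{1..n}. {\<omega>\<in>space M. (\<Sum>j=1..m. min (X j \<omega>) (1 / real n powr \<theta>)) \<ge> real m / real n + real n powr (-\<theta>/2)})"

lemma badset_good:
  assumes "\<omega> \<in> space M - badset M X n \<theta>" "m \<le> n"
  shows "\<bar>(\<Sum>j=1..m. X j \<omega>) - real m / real n\<bar> \<le> real n powr (-\<theta>/2)"
proof (cases "m = 0")
  case True then show ?thesis by simp
next
  case False
  then have m: "m \<in> {1..n}" using assms(2) by auto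
  have om: "\<omega> \<in> space M" using assms(1) by auto
  have small: "X j \<omega> \<le> 1 / real n powr \<theta>" if "j \<in> {1..m}" for j
    using assms that unfolding badset_def by fastforce
  have "(\<Sum>j=1..m. min (X j \<omega>) (1 / real n powr \<theta>)) = (\<Sum>j=1..m. X j \<omega>)"
    by (intro sum.cong refl) (simp add: small min_absorb1)
  moreover have "\<not> (\<Sum>j=1..m. min (X j \<omega>) (1 / real n powr \<theta>)) \<ge> real m / real n + real n powr (-\<theta>/2)"
    using assms(1) m om unfolding badset_def by blast
  moreover have "\<not> (\<Sum>j=1..m. X j \<omega>) \<le> real m / real n - real n powr (-\<theta>/2)"
    using assms(1) m om unfolding badset_def by blast
  ultimately show ?thesis by auto
qed

context
  fixes M :: "'a measure" and X :: "nat \<Rightarrow> 'a \<Rightarrow> real" and n :: nat and r C :: real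
  assumes P: "prob_space M" and n1: "n \<ge> 1"
    and rv[measurable]: "\<And>j. X j \<in> borel_measurable M"
    and pos: "\<And>j \<omega>. j \<ge> 1 \<Longrightarrow> \<omega> \<in> space M \<Longrightarrow> X j \<omega> > 0"
    and mean: "\<And>j. j \<ge> 1 \<Longrightarrow> integral\<^sup>L M (X j) = 1 / real n"
    and r: "r > 0" and C: "C > 0"
    and mom_int: "\<And>j. j \<ge> 1 \<Longrightarrow> integrable M (\<lambda>\<omega>. X j \<omega> powr (2 + r))"
    and mom: "\<And>j. j \<ge> 1 \<Longrightarrow> (\<integral>\<omega>. X j \<omega> powr (2 + r) \<partial>M) \<le> C / real n powr (2 + r)"
    and nsd: "\<And>m. NSD M {1..m} X"
begin

interpretation prob_space M by (rule P)

lemma int_X: assumes j: "j \<ge> 1" shows "integrable M (X j)"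
proof (rule Bochner_Integration.integrable_bound[OF Bochner_Integration.integrable_add[OF integrable_const[of 1] mom_int[OF j]]])
  show "AE x in M. norm (X j x) \<le> norm (1 + X j x powr (2 + r))"
  proof (rule AE_I2)
    fix x assume x: "x \<in> space M"
    have p: "0 < X j x" using pos[OF j x] .
    have "X j x \<le> 1 + X j x powr (2 + r)"
    proof (cases "X j x \<le> 1")
      case False
      then have "X j x powr 1 \<le> X j x powr (2 + r)" using r by (intro powr_mono) auto
      then show ?thesis using p by simp
    qed (simp add: add_increasing2)
    then show "norm (X j x) \<le> norm (1 + X j x powr (2 + r))" using p by simp
  qed
qed simp

lemma second_moment:
  assumes j: "j \<ge> 1"
  shows "integrable M (\<lambda>\<omega>. (X j \<omega>)\<^sup>2)" "(\<integral>\<omega>. (X j \<omega>)\<^sup>2 \<partial>M) \<le> (C + 1) / (real n)\<^sup>2"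
proof -
  have n0: "0 < real n" using n1 by simp
  have I: "integrable M (\<lambda>\<omega>. 1 / (real n)\<^sup>2 + X j \<omega> powr (2 + r) * real n powr r)"
    using mom_int[OF j] by auto
  have pw: "(X j \<omega>)\<^sup>2 \<le> 1 / (real n)\<^sup>2 + X j \<omega> powr (2 + r) * real n powr r" if "\<omega> \<in> space M" for \<omega>
    using sq_le_split[OF pos[OF j that] n0 r] .
  show int2: "integrable M (\<lambda>\<omega>. (X j \<omega>)\<^sup>2)"
    by (rule Bochner_Integration.integrable_bound[OF I]) (auto intro!: AE_I2 simp: pw)
  have "(\<integral>\<omega>. (X j \<omega>)\<^sup>2 \<partial>M) \<le> (\<integral>\<omega>. 1 / (real n)\<^sup>2 + X j \<omega> powr (2 + r) * real n powr r \<partial>M)"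
    by (rule integral_mono[OF int2 I pw])
  also have "\<dots> = 1 / (real n)\<^sup>2 + (\<integral>\<omega>. X j \<omega> powr (2 + r) \<partial>M) * real n powr r"
    using mom_int[OF j] by (simp add: prob_space)
  also have "\<dots> \<le> 1 / (real n)\<^sup>2 + C / real n powr (2 + r) * real n powr r"
    using mom[OF j] by (intro add_left_mono mult_right_mono) auto
  also have "C / real n powr (2 + r) * real n powr r = C / (real n)\<^sup>2"
    using n0 by (simp add: powr_add field_simps flip: powr_numeral)
  finally show "(\<integral>\<omega>. (X j \<omega>)\<^sup>2 \<partial>M) \<le> (C + 1) / (real n)\<^sup>2" by (simp add: add_divide_distrib)
qed

lemma exp_moment_lower:
  assumes j: "j \<ge> 1" and l: "l > 0"
  shows "(\<integral>\<omega>. exp (- l * X j \<omega>) \<partial>M) \<le> exp (- l / real n + l\<^sup>2 * (C + 1) / (real n)\<^sup>2)"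
proof -
  have I: "integrable M (\<lambda>\<omega>. 1 - l * X j \<omega> + l\<^sup>2 * (X j \<omega>)\<^sup>2)"
    using int_X[OF j] second_moment(1)[OF j] by auto
  have "(\<integral>\<omega>. exp (- l * X j \<omega>) \<partial>M) \<le> (\<integral>\<omega>. 1 - l * X j \<omega> + l\<^sup>2 * (X j \<omega>)\<^sup>2 \<partial>M)"
  proof (rule integral_mono'[OF I])
    fix \<omega> assume \<omega>: "\<omega> \<in> space M"
    have y: "0 \<le> l * X j \<omega>" using pos[OF j \<omega>] l by simp
    show "exp (- l * X j \<omega>) \<le> 1 - l * X j \<omega> + l\<^sup>2 * (X j \<omega>)\<^sup>2"
      using exp_neg_bound[OF y] by (simp add: power_mult_distrib)
    show "0 \<le> 1 - l * X j \<omega> + l\<^sup>2 * (X j \<omega>)\<^sup>2"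
      using sum_squares_ge_zero[of "l * X j \<omega> - 1/2" 0]
      by (simp add: power2_eq_square algebra_simps)
  qed
  also have "\<dots> = 1 - l / real n + l\<^sup>2 * (\<integral>\<omega>. (X j \<omega>)\<^sup>2 \<partial>M)"
    using int_X[OF j] second_moment(1)[OF j] mean[OF j] by (simp add: prob_space)
  also have "\<dots> \<le> 1 + (- l / real n + l\<^sup>2 * (C + 1) / (real n)\<^sup>2)"
    using mult_left_mono[OF second_moment(2)[OF j], of "l\<^sup>2"] by (simp add: times_divide_eq_right)
  also have "\<dots> \<le> exp (- l / real n + l\<^sup>2 * (C + 1) / (real n)\<^sup>2)" by (rule exp_ge_add_one_self)
  finally show ?thesis .
qed

lemma exp_moment_upper:
  assumes j: "j \<ge> 1" and l: "l > 0"
  shows "(\<integral>\<omega>. exp (l * min (X j \<omega>) (1 / l)) \<partial>M) \<le> exp (l / real n + l\<^sup>2 * (C + 1) / (real n)\<^sup>2)"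
proof -
  have I: "integrable M (\<lambda>\<omega>. 1 + l * X j \<omega> + l\<^sup>2 * (X j \<omega>)\<^sup>2)"
    using int_X[OF j] second_moment(1)[OF j] by auto
  have "(\<integral>\<omega>. exp (l * min (X j \<omega>) (1 / l)) \<partial>M) \<le> (\<integral>\<omega>. 1 + l * X j \<omega> + l\<^sup>2 * (X j \<omega>)\<^sup>2 \<partial>M)"
  proof (rule integral_mono'[OF I])
    fix \<omega> assume \<omega>: "\<omega> \<in> space M"
    have p: "0 < X j \<omega>" using pos[OF j \<omega>] .
    define y where "y = l * min (X j \<omega>) (1 / l)"
    have y0: "0 \<le> y" "y \<le> 1" "y \<le> l * X j \<omega>" using p l by (auto simp: y_def min_def field_simps)
    have "exp y \<le> 1 + y + y\<^sup>2" by (rule exp_bound[OF y0(1,2)])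
    also have "\<dots> \<le> 1 + l * X j \<omega> + (l * X j \<omega>)\<^sup>2"
      using y0 by (intro add_mono power_mono) auto
    finally show "exp (l * min (X j \<omega>) (1 / l)) \<le> 1 + l * X j \<omega> + l\<^sup>2 * (X j \<omega>)\<^sup>2"
      by (simp add: y_def power_mult_distrib)
    show "0 \<le> 1 + l * X j \<omega> + l\<^sup>2 * (X j \<omega>)\<^sup>2" using p l by (simp add: add_nonneg_nonneg)
  qed
  also have "\<dots> = 1 + l / real n + l\<^sup>2 * (\<integral>\<omega>. (X j \<omega>)\<^sup>2 \<partial>M)"
    using int_X[OF j] second_moment(1)[OF j] mean[OF j] by (simp add: prob_space)
  also have "\<dots> \<le> 1 + (l / real n + l\<^sup>2 * (C + 1) / (real n)\<^sup>2)"
    using mult_left_mono[OF second_moment(2)[OF j], of "l\<^sup>2"] by (simp add: times_divide_eq_right)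
  also have "\<dots> \<le> exp (l / real n + l\<^sup>2 * (C + 1) / (real n)\<^sup>2)" by (rule exp_ge_add_one_self)
  finally show ?thesis .
qed

lemma lower_tail:
  assumes l: "l > 0"
  shows "measure M {\<omega>\<in>space M. (\<Sum>j=1..m. X j \<omega>) \<le> real m / real n - \<epsilon>}
           \<le> exp (- l * \<epsilon> + l\<^sup>2 * real m * (C + 1) / (real n)\<^sup>2)"
proof -
  define a where "a = real m / real n - \<epsilon>"
  define K where "K = - l / real n + l\<^sup>2 * (C + 1) / (real n)\<^sup>2"
  have eqS: "exp (- l * (\<Sum>j=1..m. X j \<omega>)) = (\<Prod>j\<in>{1..m}. exp (- l * X j \<omega>))" for \<omega>
    by (simp add: sum_distrib_left exp_sum)
  have set_eq: "{\<omega>\<in>space M. (\<Sum>j=1..m. X j \<omega>) \<le> a} = {\<omega>\<in>space M. exp (- l * (\<Sum>j=1..m. X j \<omega>)) \<ge> exp (- l * a)}"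
    using l by auto
  have intP: "integrable M (\<lambda>\<omega>. exp (- l * (\<Sum>j=1..m. X j \<omega>)))"
  proof (rule integrable_const_bound[where B=1])
    show "AE x in M. norm (exp (- l * (\<Sum>j=1..m. X j x))) \<le> 1"
    proof (rule AE_I2)
      fix x assume x: "x \<in> space M"
      have "0 \<le> (\<Sum>j=1..m. X j x)" by (intro sum_nonneg) (use pos x in \<open>auto intro: less_imp_le\<close>)
      then show "norm (exp (- l * (\<Sum>j=1..m. X j x))) \<le> 1" using l by simp
    qed
  qed simp
  have "measure M {\<omega>\<in>space M. (\<Sum>j=1..m. X j \<omega>) \<le> a} \<le> (\<integral>\<omega>. exp (- l * (\<Sum>j=1..m. X j \<omega>)) \<partial>M) / exp (- l * a)"
    unfolding set_eq by (rule integral_Markov_inequality_measure[OF intP]) auto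
  also have "(\<integral>\<omega>. exp (- l * (\<Sum>j=1..m. X j \<omega>)) \<partial>M) \<le> (\<Prod>j\<in>{1..m}. \<integral>\<omega>. exp (- l * X j \<omega>) \<partial>M)"
  proof -
    have "(\<integral>\<omega>. (\<Prod>j\<in>{1..m}. exp (- l * (\<lambda>x. x) (X j \<omega>))) \<partial>M) \<le> (\<Prod>j\<in>{1..m}. \<integral>\<omega>. exp (- l * (\<lambda>x. x) (X j \<omega>)) \<partial>M)"
    proof (rule nsd_prod_bound[OF P nsd, where B=1])
      show "mono (\<lambda>x::real. x)" by (simp add: mono_def)
      fix i \<omega> assume "i \<in> {1..m}" "\<omega> \<in> space M"
      then show "exp (- l * (\<lambda>x. x) (X i \<omega>)) \<le> 1" using pos[of i \<omega>] l by simp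
    qed auto
    then show ?thesis unfolding eqS by simp
  qed
  also have "(\<Prod>j\<in>{1..m}. \<integral>\<omega>. exp (- l * X j \<omega>) \<partial>M) \<le> (\<Prod>j\<in>{1..m}. exp K)"
  proof (rule prod_mono)
    fix j assume "j \<in> {1..m}"
    then show "0 \<le> (\<integral>\<omega>. exp (- l * X j \<omega>) \<partial>M) \<and> (\<integral>\<omega>. exp (- l * X j \<omega>) \<partial>M) \<le> exp K"
      using exp_moment_lower[of j l] l unfolding K_def by auto
  qed
  also have "(\<Prod>j\<in>{1..m}. exp K) = exp (real m * K)" by (simp add: exp_of_nat_mult)
  finally have "measure M {\<omega>\<in>space M. (\<Sum>j=1..m. X j \<omega>) \<le> a} \<le> exp (real m * K) / exp (- l * a)"
    by (simp add: divide_right_mono)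
  also have "exp (real m * K) / exp (- l * a) = exp (- l * \<epsilon> + l\<^sup>2 * real m * (C + 1) / (real n)\<^sup>2)"
    unfolding exp_diff[symmetric] using n1 by (simp add: K_def a_def field_simps)
  finally show ?thesis unfolding a_def .
qed

lemma upper_tail:
  assumes l: "l > 0"
  shows "measure M {\<omega>\<in>space M. (\<Sum>j=1..m. min (X j \<omega>) (1 / l)) \<ge> real m / real n + \<epsilon>}
           \<le> exp (- l * \<epsilon> + l\<^sup>2 * real m * (C + 1) / (real n)\<^sup>2)"
proof -
  define a where "a = real m / real n + \<epsilon>"
  define K where "K = l / real n + l\<^sup>2 * (C + 1) / (real n)\<^sup>2"
  define g where "g = (\<lambda>x::real. min x (1 / l))"
  have eqS: "exp (l * (\<Sum>j=1..m. min (X j \<omega>) (1 / l))) = (\<Prod>j\<in>{1..m}. exp (l * g (X j \<omega>)))" for \<omega>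
    by (simp add: sum_distrib_left exp_sum g_def)
  have set_eq: "{\<omega>\<in>space M. (\<Sum>j=1..m. min (X j \<omega>) (1 / l)) \<ge> a}
      = {\<omega>\<in>space M. exp (l * (\<Sum>j=1..m. min (X j \<omega>) (1 / l))) \<ge> exp (l * a)}"
    using l by auto
  have intP: "integrable M (\<lambda>\<omega>. exp (l * (\<Sum>j=1..m. min (X j \<omega>) (1 / l))))"
  proof (rule integrable_const_bound[where B="exp (real m)"])
    show "AE x in M. norm (exp (l * (\<Sum>j=1..m. min (X j x) (1 / l)))) \<le> exp (real m)"
    proof (rule AE_I2)
      fix x assume x: "x \<in> space M"
      have "(\<Sum>j=1..m. min (X j x) (1 / l)) \<le> (\<Sum>j=1..m. 1 / l)" by (intro sum_mono) auto
      then have "l * (\<Sum>j=1..m. min (X j x) (1 / l)) \<le> l * (\<Sum>j=1..m. 1 / l)" using l by (intro mult_left_mono) auto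
      then show "norm (exp (l * (\<Sum>j=1..m. min (X j x) (1 / l)))) \<le> exp (real m)" using l by simp
    qed
  qed simp
  have "measure M {\<omega>\<in>space M. (\<Sum>j=1..m. min (X j \<omega>) (1 / l)) \<ge> a} \<le> (\<integral>\<omega>. exp (l * (\<Sum>j=1..m. min (X j \<omega>) (1 / l))) \<partial>M) / exp (l * a)"
    unfolding set_eq by (rule integral_Markov_inequality_measure[OF intP]) auto
  also have "(\<integral>\<omega>. exp (l * (\<Sum>j=1..m. min (X j \<omega>) (1 / l))) \<partial>M) \<le> (\<Prod>j\<in>{1..m}. \<integral>\<omega>. exp (l * g (X j \<omega>)) \<partial>M)"
    unfolding eqS
  proof (rule nsd_prod_bound[OF P nsd, where B="exp 1"])
    show "mono g" by (auto simp: mono_def g_def min_def)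
    show "g \<in> borel_measurable borel" unfolding g_def by measurable
    fix i \<omega> assume "i \<in> {1..m}" "\<omega> \<in> space M"
    show "exp (l * g (X i \<omega>)) \<le> exp 1" using l by (simp add: g_def min_def field_simps)
  qed auto
  also have "(\<Prod>j\<in>{1..m}. \<integral>\<omega>. exp (l * g (X j \<omega>)) \<partial>M) \<le> (\<Prod>j\<in>{1..m}. exp K)"
  proof (rule prod_mono)
    fix j assume "j \<in> {1..m}"
    then show "0 \<le> (\<integral>\<omega>. exp (l * g (X j \<omega>)) \<partial>M) \<and> (\<integral>\<omega>. exp (l * g (X j \<omega>)) \<partial>M) \<le> exp K"
      using exp_moment_upper[of j l] l unfolding K_def g_def by auto
  qed
  also have "(\<Prod>j\<in>{1..m}. exp K) = exp (real m * K)" by (simp add: exp_of_nat_mult)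
  finally have "measure M {\<omega>\<in>space M. (\<Sum>j=1..m. min (X j \<omega>) (1 / l)) \<ge> a} \<le> exp (real m * K) / exp (l * a)"
    by (simp add: divide_right_mono)
  also have "exp (real m * K) / exp (l * a) = exp (- l * \<epsilon> + l\<^sup>2 * real m * (C + 1) / (real n)\<^sup>2)"
    unfolding exp_diff[symmetric] using n1 by (simp add: K_def a_def field_simps)
  finally show ?thesis unfolding a_def .
qed

lemma big_jump:
  assumes j: "j \<ge> 1" and d: "\<delta> > 0"
  shows "measure M {\<omega>\<in>space M. X j \<omega> > \<delta>} \<le> C / real n powr (2 + r) / \<delta> powr (2 + r)"
proof -
  have "measure M {\<omega>\<in>space M. X j \<omega> > \<delta>} \<le> measure M {\<omega>\<in>space M. X j \<omega> powr (2 + r) \<ge> \<delta> powr (2 + r)}"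
  proof (rule finite_measure_mono)
    show "{\<omega>\<in>space M. X j \<omega> > \<delta>} \<subseteq> {\<omega>\<in>space M. X j \<omega> powr (2 + r) \<ge> \<delta> powr (2 + r)}"
    proof safe
      fix \<omega> assume "\<omega> \<in> space M" "\<delta> < X j \<omega>"
      then show "\<delta> powr (2 + r) \<le> X j \<omega> powr (2 + r)"
        using d r by (intro powr_mono2) auto
    qed
    show "{\<omega>\<in>space M. X j \<omega> powr (2 + r) \<ge> \<delta> powr (2 + r)} \<in> sets M" by measurable
  qed
  also have "\<dots> \<le> (\<integral>\<omega>. X j \<omega> powr (2 + r) \<partial>M) / \<delta> powr (2 + r)"
    by (rule integral_Markov_inequality_measure[OF mom_int[OF j]]) (use d in auto)
  also have "\<dots> \<le> C / real n powr (2 + r) / \<delta> powr (2 + r)"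
    using mom[OF j] d by (intro divide_right_mono) auto
  finally show ?thesis .
qed


lemma badset_sets: "badset M X n \<theta> \<in> sets M"
  unfolding badset_def by measurable

lemma badset_measure:
  assumes th: "\<theta> = r / (4 + 2 * r)"
  shows "measure M (badset M X n \<theta>)
     \<le> real n * (C * real n powr (-2 - r/2)) + 2 * real n * (exp (C + 1) * exp (- (real n powr (\<theta>/2))))"
proof -
  define l where "l = real n powr \<theta>"
  define \<epsilon> where "\<epsilon> = real n powr (-\<theta>/2)"
  have n0: "real n > 0" "real n \<ge> 1" using n1 by auto
  have th0: "0 < \<theta>" "2 * \<theta> \<le> 1" "\<theta> * (2 + r) = r / 2" using r by (auto simp: th field_simps)
  have l0: "l > 0" using n1 by (simp add: l_def)
  have l2: "l\<^sup>2 \<le> real n"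
  proof -
    have "l\<^sup>2 = real n powr \<theta> * real n powr \<theta>" unfolding l_def by (rule power2_eq_square)
    also have "\<dots> = real n powr (\<theta> + \<theta>)" by (rule powr_add[symmetric])
    also have "\<dots> = real n powr (2 * \<theta>)" by (simp only: mult_2)
    also have "\<dots> \<le> real n powr 1" using n0 th0 by (intro powr_mono) auto
    finally show ?thesis using n0 by simp
  qed
  have le: "l * \<epsilon> = real n powr (\<theta>/2)"
  proof -
    have "l * \<epsilon> = real n powr (\<theta> + -\<theta>/2)" unfolding l_def \<epsilon>_def by (rule powr_add[symmetric])
    also have "\<theta> + -\<theta>/2 = \<theta>/2" by linarith
    finally show ?thesis .
  qed
  have tailb: "exp (- l * \<epsilon> + l\<^sup>2 * real m * (C + 1) / (real n)\<^sup>2) \<le> exp (C + 1) * exp (- (real n powr (\<theta>/2)))"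
    if "m \<le> n" for m
  proof -
    have "l\<^sup>2 * real m * (C + 1) / (real n)\<^sup>2 \<le> real n * real n * (C + 1) / (real n)\<^sup>2"
      using that l2 C by (intro divide_right_mono mult_right_mono mult_mono) auto
    also have "\<dots> = C + 1" using n0 by (simp add: power2_eq_square)
    finally show ?thesis using le by (simp add: mult_exp_exp)
  qed
  have jump: "measure M {\<omega>\<in>space M. X j \<omega> > 1 / real n powr \<theta>} \<le> C * real n powr (-2 - r/2)" if "j \<in> {1..n}" for j
  proof -
    have "measure M {\<omega>\<in>space M. X j \<omega> > 1 / real n powr \<theta>} \<le> C / real n powr (2 + r) / (1 / real n powr \<theta>) powr (2 + r)"
      using that n1 by (intro big_jump) auto
    also have "\<dots> = C * real n powr (-2 - r/2)"
    proof -
      have "(1 / real n powr \<theta>) = (real n powr (-\<theta>))" by (rule powr_minus_divide[symmetric])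
      then have "(1 / real n powr \<theta>) powr (2 + r) = (real n powr (-\<theta>)) powr (2 + r)" by (rule arg_cong)
      also have "\<dots> = real n powr (-\<theta> * (2 + r))" by (rule powr_powr)
      also have "-\<theta> * (2 + r) = - (r/2)" using th0(3) by linarith
      finally have h: "(1 / real n powr \<theta>) powr (2 + r) = real n powr (- (r/2))" .
      have "C / real n powr (2 + r) / real n powr (- (r/2)) = C * (real n powr (- (2 + r)) * real n powr (r/2))"
        by (simp only: powr_minus divide_inverse inverse_inverse_eq mult.assoc)
      also have "real n powr (- (2 + r)) * real n powr (r/2) = real n powr (- (2 + r) + r/2)" by (rule powr_add[symmetric])
      also have "- (2 + r) + r/2 = -2 - r/2" by linarith
      finally show ?thesis unfolding h .
    qed
    finally show ?thesis .
  qed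
  have low: "measure M {\<omega>\<in>space M. (\<Sum>j=1..m. X j \<omega>) \<le> real m / real n - real n powr (-\<theta>/2)}
      \<le> exp (C + 1) * exp (- (real n powr (\<theta>/2)))" if "m \<in> {1..n}" for m
    using order.trans[OF lower_tail[OF l0, of m \<epsilon>] tailb[of m]] that unfolding \<epsilon>_def by simp
  have up: "measure M {\<omega>\<in>space M. (\<Sum>j=1..m. min (X j \<omega>) (1 / real n powr \<theta>)) \<ge> real m / real n + real n powr (-\<theta>/2)}
      \<le> exp (C + 1) * exp (- (real n powr (\<theta>/2)))" if "m \<in> {1..n}" for m
    using order.trans[OF upper_tail[OF l0, of m \<epsilon>] tailb[of m]] that unfolding \<epsilon>_def l_def by simp
  let ?A = "\<Union>j\<in>{1..n}. {\<omega>\<in>space M. X j \<omega> > 1 / real n powr \<theta>}"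
  let ?B = "\<Union>m\<in>{1..n}. {\<omega>\<in>space M. (\<Sum>j=1..m. X j \<omega>) \<le> real m / real n - real n powr (-\<theta>/2)}"
  let ?C = "\<Union>m\<in>{1..n}. {\<omega>\<in>space M. (\<Sum>j=1..m. min (X j \<omega>) (1 / real n powr \<theta>)) \<ge> real m / real n + real n powr (-\<theta>/2)}"
  have "measure M (badset M X n \<theta>) \<le> measure M ?A + measure M ?B + measure M ?C"
    unfolding badset_def
    by (rule order.trans[OF measure_Un_le add_right_mono[OF measure_Un_le]]) measurable
  also have "measure M ?A \<le> (\<Sum>j\<in>{1..n}. C * real n powr (-2 - r/2))"
    by (rule order.trans[OF measure_UNION_le sum_mono]) (auto intro: jump)
  also have "measure M ?B \<le> (\<Sum>m\<in>{1..n}. exp (C + 1) * exp (- (real n powr (\<theta>/2))))"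
    by (rule order.trans[OF measure_UNION_le sum_mono]) (use low in auto)
  also have "measure M ?C \<le> (\<Sum>m\<in>{1..n}. exp (C + 1) * exp (- (real n powr (\<theta>/2))))"
    by (rule order.trans[OF measure_UNION_le sum_mono]) (use up in auto)
  finally show ?thesis by simp
qed

end



lemma exp_dominates:
  fixes s :: real and n k :: nat
  assumes s: "s > 0" and k: "k \<ge> 1" "real k * s \<ge> 3" and n: "n \<ge> 1"
  shows "real n * exp (- (real n powr s)) \<le> real k ^ k * inverse (real n ^ 2)"
proof -
  define y where "y = real n powr s"
  have n0: "real n > 0" "real n \<ge> 1" using n by auto
  have y0: "0 \<le> y" by (simp add: y_def)
  have k0: "real k > 0" using k by simp
  have "exp y = exp (y / real k) ^ k"
    using exp_of_nat_mult[of k "y / real k"] k0 by simp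
  moreover have "(y / real k) ^ k \<le> exp (y / real k) ^ k"
  proof (rule power_mono)
    show "y / real k \<le> exp (y / real k)" using exp_ge_add_one_self[of "y / real k"] by linarith
  qed (use y0 k0 in auto)
  ultimately have e1: "(y / real k) ^ k \<le> exp y" by simp
  have "y ^ k = real n powr (real k * s)" unfolding y_def by (rule powr_power) (use n0 in simp)
  moreover have "real n powr 3 \<le> real n powr (real k * s)" using n0 k by (intro powr_mono) auto
  moreover have "real n powr 3 = real n ^ 3" by (rule powr_numeral) simp
  ultimately have "real n ^ 3 \<le> y ^ k" by simp
  then have "real n ^ 3 / real k ^ k \<le> (y / real k) ^ k" by (simp add: power_divide divide_right_mono)
  with e1 have e2: "real n ^ 3 / real k ^ k \<le> exp y" by linarith
  have pos: "0 < real n ^ 3 / real k ^ k" using n0 k0 by simp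
  have "real n * exp (- y) = real n / exp y" by (simp add: exp_minus divide_inverse)
  also have "\<dots> \<le> real n / (real n ^ 3 / real k ^ k)"
    using e2 pos n0 k0 by (intro divide_left_mono) auto
  also have "\<dots> = real k ^ k * inverse (real n ^ 2)"
    using n0 k0 by (simp add: field_simps power3_eq_cube power2_eq_square)
  finally show ?thesis by (simp add: y_def)
qed

lemma bound_summable:
  fixes r C \<theta> :: real
  assumes r: "r > 0" and th: "\<theta> > 0"
  shows "summable (\<lambda>n. real n * (C * real n powr (-2 - r/2)) + 2 * real n * (exp (C + 1) * exp (- (real n powr (\<theta>/2)))))"
proof (rule summable_add)
  have "summable (\<lambda>n. C * real n powr (-1 - r/2))"
    using r by (intro summable_mult) (simp add: summable_real_powr_iff)
  moreover have "real n * (C * real n powr (-2 - r/2)) = C * real n powr (-1 - r/2)" for n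
  proof (cases "n = 0")
    case False
    then have "real n * real n powr (-2 - r/2) = real n powr 1 * real n powr (-2 - r/2)" by simp
    also have "\<dots> = real n powr (1 + (-2 - r/2))" by (rule powr_add[symmetric])
    also have "1 + (-2 - r/2) = -1 - r/2" by linarith
    finally show ?thesis by (simp add: algebra_simps)
  qed simp
  ultimately show "summable (\<lambda>n. real n * (C * real n powr (-2 - r/2)))" by presburger
next
  define k where "k = nat \<lceil>6 / \<theta>\<rceil> + 1"
  have k1: "k \<ge> 1" by (simp add: k_def)
  have "real k \<ge> 6 / \<theta>" unfolding k_def by linarith
  then have k3: "real k * (\<theta>/2) \<ge> 3" using th by (simp add: field_simps)
  have th2: "\<theta>/2 > 0" using th by simp
  have "summable (\<lambda>n. 2 * exp (C + 1) * (real k ^ k * inverse (real n ^ 2)))"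
    by (intro summable_mult inverse_power_summable) simp
  then show "summable (\<lambda>n. 2 * real n * (exp (C + 1) * exp (- (real n powr (\<theta>/2)))))"
  proof (rule summable_comparison_test'[where N=1])
    fix n :: nat assume "n \<ge> 1"
    from exp_dominates[OF th2 k1 k3 this]
    show "norm (2 * real n * (exp (C + 1) * exp (- (real n powr (\<theta>/2)))))
        \<le> 2 * exp (C + 1) * (real k ^ k * inverse (real n ^ 2))"
      by (simp add: mult.assoc mult.left_commute[of "exp (C+1)"] mult_left_mono)
  qed
qed



lemma NSD_cong:
  assumes "\<And>i. i \<in> I \<Longrightarrow> X i = Y i"
  shows "NSD M I X = NSD M I Y"
proof -
  have r: "restrict (\<lambda>i. X i \<omega>) I = restrict (\<lambda>i. Y i \<omega>) I" for \<omega>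
    using assms by (auto simp: restrict_def fun_eq_iff)
  have p: "PiM I (\<lambda>i. distr M borel (X i)) = PiM I (\<lambda>i. distr M borel (Y i))"
    by (rule PiM_cong) (auto simp: assms)
  show ?thesis unfolding NSD_def r p ..
qed

theorem theorem2p2:
  fixes M :: "'a measure"
    and t :: "nat \<Rightarrow> nat \<Rightarrow> 'a \<Rightarrow> real"
    and W :: "real \<Rightarrow> 'a \<Rightarrow> real"
    and a r C :: real
  assumes "prob_space M"
    and rv: "\<And>N j. N \<ge> 1 \<Longrightarrow> j \<ge> 1 \<Longrightarrow> t N j \<in> borel_measurable M"
    and pos: "\<And>N j \<omega>. N \<ge> 1 \<Longrightarrow> j \<ge> 1 \<Longrightarrow> \<omega> \<in> space M \<Longrightarrow> t N j \<omega> > 0"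
    and mean: "\<And>N j. N \<ge> 1 \<Longrightarrow> j \<ge> 1 \<Longrightarrow> integral\<^sup>L M (t N j) = 1 / real N"
    and "r > 0" and "C > 0"
    and mom_int: "\<And>N j. N \<ge> 1 \<Longrightarrow> j \<ge> 1 \<Longrightarrow> integrable M (\<lambda>\<omega>. t N j \<omega> powr (2 + r))"
    and mom: "\<And>N j. N \<ge> 1 \<Longrightarrow> j \<ge> 1 \<Longrightarrow>
               (\<integral>\<omega>. t N j \<omega> powr (2 + r) \<partial>M) \<le> C / real N powr (2 + r)"
    and nsd: "\<And>N m. N \<ge> 1 \<Longrightarrow> NSD M {1..m} (t N)"
    and W_rv: "\<And>s. s \<ge> 0 \<Longrightarrow> W s \<in> borel_measurable M"
    and W_cont: "AE \<omega> in M. continuous_on {0..} (\<lambda>s. W s \<omega>)"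
  shows "AE \<omega> in M.
     ((\<lambda>N. real N *
        ((\<Sum>i=1..N. (a * (\<Sum>j=1..i. t N j \<omega>)
                       + W (\<Sum>j=1..i. t N j \<omega>) \<omega> - W (\<Sum>j=1..i-1. t N j \<omega>) \<omega>)
                     * (\<Sum>j=1..i. t N j \<omega>))
          / (\<Sum>i=1..N. (\<Sum>j=1..i. t N j \<omega>)^2) - a))
      \<longlonglongrightarrow> 3 * integral {0..1} (\<lambda>s. W 1 \<omega> - W s \<omega>))"
proof -
  interpret prob_space M by fact
  define \<theta> where "\<theta> = r / (4 + 2 * r)"
  have th0: "\<theta> > 0" using \<open>r > 0\<close> by (simp add: \<theta>_def)
  define X where "X N j = (if j \<ge> 1 then t N j else (\<lambda>_. 1))" for N j
  have XN: "j \<ge> 1 \<Longrightarrow> X N j = t N j" for N j by (simp add: X_def)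
  have rvX: "X N j \<in> borel_measurable M" if "N \<ge> 1" for N j
    using rv[OF that] by (cases "j \<ge> 1") (auto simp: X_def)
  have nsdX: "NSD M {1..m} (X N)" if "N \<ge> 1" for N m
    using nsd[OF that, of m] by (subst NSD_cong[where Y="t N"]) (auto simp: XN)
  have sets: "badset M (X N) N \<theta> \<in> sets M" if N: "N \<ge> 1" for N
    by (rule badset_sets[OF \<open>prob_space M\<close> N rvX[OF N] _ _ \<open>r > 0\<close> \<open>C > 0\<close> _ _ nsdX[OF N]])
       (use N in \<open>auto simp: XN intro!: pos mean mom_int mom\<close>)
  have meas: "measure M (badset M (X N) N \<theta>)
     \<le> real N * (C * real N powr (-2 - r/2)) + 2 * real N * (exp (C + 1) * exp (- (real N powr (\<theta>/2))))"
    if N: "N \<ge> 1" for N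
    by (rule badset_measure[OF \<open>prob_space M\<close> N rvX[OF N] _ _ \<open>r > 0\<close> \<open>C > 0\<close> _ _ nsdX[OF N] \<theta>_def])
       (use N in \<open>auto simp: XN intro!: pos mean mom_int mom\<close>)
  define A where "A N = (if N \<ge> 1 then badset M (X N) N \<theta> else {})" for N
  have Asets: "A N \<in> sets M" for N by (simp add: A_def sets)
  have Asum: "summable (\<lambda>N. measure M (A N))"
  proof (rule summable_comparison_test'[OF bound_summable[OF \<open>r > 0\<close> th0, of C], where N=1])
    fix N :: nat assume "N \<ge> 1"
    then show "norm (measure M (A N)) \<le> real N * (C * real N powr (-2 - r/2)) + 2 * real N * (exp (C + 1) * exp (- (real N powr (\<theta>/2))))"
      using meas by (simp add: A_def)
  qed
  have AE1: "AE \<omega> in M. eventually (\<lambda>N. \<omega> \<in> space M - A N) sequentially"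
    by (rule borel_cantelli_AE1[OF Asets _ Asum]) (simp add: less_top[symmetric])
  show ?thesis
    using AE1 W_cont
  proof (eventually_elim)
    case (elim \<omega>)
    note ev = elim(1) and Wc = elim(2)
    define T where "T N i = (\<Sum>j=1..i. t N j \<omega>)" for N i
    define e where "e N = real N powr (- \<theta> / 2)" for N
    have e: "e \<longlonglongrightarrow> 0" unfolding e_def
      by (rule tendsto_neg_powr[OF _ filterlim_real_sequentially]) (use th0 in simp)
    have T0: "T N 0 = 0" for N by (simp add: T_def)
    have om: "\<omega> \<in> space M"
    proof -
      from ev obtain N0 where "\<forall>N\<ge>N0. \<omega> \<in> space M - A N" by (auto simp: eventually_sequentially)
      then show ?thesis by auto
    qed
    have mono: "T N (i-1) \<le> T N i" if "1 \<le> i" "i \<le> N" for N i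
    proof -
      from that obtain k where k: "i = Suc k" by (cases i) auto
      then have "T N i = t N i \<omega> + T N (i-1)" unfolding T_def by (simp add: sum.cl_ivl_Suc)
      moreover have "t N i \<omega> > 0"
        using om that by (intro pos) auto
      ultimately show ?thesis by simp
    qed
    have close: "eventually (\<lambda>N. \<forall>i\<le>N. \<bar>T N i - real i / real N\<bar> \<le> e N) sequentially"
      using ev eventually_ge_at_top[of 1]
    proof eventually_elim
      case (elim N)
      show ?case
      proof (intro allI impI)
        fix i assume "i \<le> N"
        have "\<omega> \<in> space M - badset M (X N) N \<theta>" using elim by (simp add: A_def)
        from badset_good[OF this \<open>i \<le> N\<close>]
        have "\<bar>(\<Sum>j=1..i. X N j \<omega>) - real i / real N\<bar> \<le> real N powr (-\<theta>/2)" .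
        moreover have "(\<Sum>j=1..i. X N j \<omega>) = T N i" unfolding T_def by (intro sum.cong) (auto simp: XN)
        ultimately show "\<bar>T N i - real i / real N\<bar> \<le> e N" by (simp add: e_def)
      qed
    qed
    from det_final[OF Wc T0 mono e close, of a]
    show ?case unfolding T_def .
  qed
qed


end
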